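(* For every formula $A$, the context $\psi(A)$ is irreducible and is a maximal decomposition of $A$: the sequent $\psi(A)\vdash A$ is derivable, and for every irreducible context $\Theta$ such that $\Theta\vdash A$ is derivable, $\Theta\le\psi(A)$ in the substitution order.
   Context: Formulas are built from atoms ($p,q,\dots$) by a binary product: every formula is an atom or $A\bullet B$. A context is a finite (possibly empty) list of formulas; commas denote concatenation; a context is irreducible if its leftmost formula is not a product. $\psi$ is defined inductively by $\psi(p)=p$ for atoms and $\psi(A\bullet B)=\psi(A),B$. The sequent calculus has exactly four rules (no weakening, contraction or exchange): ($\bullet L$) from $A,B,\Delta\vdash C$ infer $A\bullet B,\Delta\vdash C$ (the product must be leftmost); ($\bullet R$) from $\Gamma\vdash A$ and $\Delta\vdash B$ infer $\Gamma,\Delta\vdash A\bullet B$; ($id$) $A\vdash A$; ($cut$) from $\Theta\vdash A$ and $\Gamma,A,\Delta\vdash B$ infer $\Gamma,\Theta,\Delta\vdash B$; derivable means conclusion of a finite derivation tree with no undischarged premises. The substitution order on contexts is the least relation $\le$ such that: (1) if $\Gamma\vdash A$ is derivable then $\Gamma\le A$ (one-element context); (2) $\cdot\le\cdot$ for the empty context; (3) if $\Gamma_1\le\Gamma_2$ and $\Theta_1\le\Theta_2$ then $(\Gamma_1,\Theta_1)\le(\Gamma_2,\Theta_2)$. *)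

theory Defs
  imports Main
begin

datatype 'a fm = Atom 'a | Prod "'a fm" "'a fm"

type_synonym 'a ctx = "'a fm list"

inductive derivable :: "'a ctx \<Rightarrow> 'a fm \<Rightarrow> bool" where
  prodL: "derivable (A # B # \<Delta>) C \<Longrightarrow> derivable (Prod A B # \<Delta>) C"
| prodR: "derivable \<Gamma> A \<Longrightarrow> derivable \<Delta> B \<Longrightarrow> derivable (\<Gamma> @ \<Delta>) (Prod A B)"
| ident: "derivable [A] A"
| cut: "derivable \<Theta> A \<Longrightarrow> derivable (\<Gamma> @ [A] @ \<Delta>) B \<Longrightarrow> derivable (\<Gamma> @ \<Theta> @ \<Delta>) B"

definition irreducible :: "'a ctx \<Rightarrow> bool" where
  "irreducible \<Gamma> \<longleftrightarrow> (\<forall>A B \<Delta>. \<Gamma> \<noteq> Prod A B # \<Delta>)"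

fun psi :: "'a fm \<Rightarrow> 'a ctx" where
  "psi (Atom p) = [Atom p]"
| "psi (Prod A B) = psi A @ [B]"

inductive subst_le :: "'a ctx \<Rightarrow> 'a ctx \<Rightarrow> bool" where
  seq: "derivable \<Gamma> A \<Longrightarrow> subst_le \<Gamma> [A]"
| empty: "subst_le [] []"
| concat: "subst_le \<Gamma>1 \<Gamma>2 \<Longrightarrow> subst_le \<Theta>1 \<Theta>2 \<Longrightarrow> subst_le (\<Gamma>1 @ \<Theta>1) (\<Gamma>2 @ \<Theta>2)"

end

theory Submission
  imports Defs
begin

inductive cf :: "'a ctx \<Rightarrow> 'a fm \<Rightarrow> bool" where
  cfL: "cf (A # B # \<Delta>) C \<Longrightarrow> cf (Prod A B # \<Delta>) C"
| cfR: "cf \<Gamma> A \<Longrightarrow> cf \<Delta> B \<Longrightarrow> cf (\<Gamma> @ \<Delta>) (Prod A B)"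
| cfAt: "cf [Atom p] (Atom p)"

lemma cf_der: "cf G C \<Longrightarrow> derivable G C"
  by (induction rule: cf.induct) (auto intro: derivable.intros)

lemma cf_id: "cf [A] A"
proof (induction A)
  case (Atom x) then show ?case by (rule cfAt)
next
  case (Prod A1 A2)
  have "cf ([A1] @ [A2]) (Prod A1 A2)" using Prod by (rule cfR)
  then have "cf (A1 # A2 # []) (Prod A1 A2)" by simp
  then show ?case by (rule cfL)
qed

lemma cf_ne: "cf G C \<Longrightarrow> G \<noteq> []"
  by (induction rule: cf.induct) auto

lemma principal:
  assumes IHX: "\<forall>\<Theta> \<Gamma> \<Delta> B. cf \<Theta> X \<longrightarrow> cf (\<Gamma>@[X]@\<Delta>) B \<longrightarrow> cf (\<Gamma>@\<Theta>@\<Delta>) B"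
    and IHY: "\<forall>\<Theta> \<Gamma> \<Delta> B. cf \<Theta> Y \<longrightarrow> cf (\<Gamma>@[Y]@\<Delta>) B \<longrightarrow> cf (\<Gamma>@\<Theta>@\<Delta>) B"
  shows "cf \<Theta> C \<Longrightarrow> C = Prod X Y \<Longrightarrow> cf (X#Y#\<Delta>) B \<Longrightarrow> cf (\<Theta>@\<Delta>) B"
proof (induction arbitrary: \<Delta> rule: cf.induct)
  case (cfL P Q \<Theta>' C)
  then have "cf (P#Q#\<Theta>'@\<Delta>) B" by simp
  then show ?case by (simp add: cf.cfL)
next
  case (cfR G1 A G2 B')
  have "cf ([]@[X]@(Y#\<Delta>)) B" using cfR by simp
  then have "cf ([]@G1@(Y#\<Delta>)) B" using IHX[rule_format, of G1 "[]" "Y#\<Delta>" B] cfR by simp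
  then have "cf (G1@[Y]@\<Delta>) B" by simp
  then have "cf (G1@G2@\<Delta>) B" using IHY[rule_format, of G2 G1 \<Delta> B] cfR by simp
  then show ?case by simp
next
  case (cfAt p) then show ?case by simp
qed

lemma cut_adm: "\<forall>\<Theta> \<Gamma> \<Delta> B. cf \<Theta> A \<longrightarrow> cf (\<Gamma>@[A]@\<Delta>) B \<longrightarrow> cf (\<Gamma>@\<Theta>@\<Delta>) B"
proof (induction A)
  case (Atom x)
  have "cf G B \<Longrightarrow> G = \<Gamma>@[Atom x]@\<Delta> \<Longrightarrow> cf \<Theta> (Atom x) \<Longrightarrow> cf (\<Gamma>@\<Theta>@\<Delta>) B" for G B \<Gamma> \<Delta> \<Theta>
  proof (induction arbitrary: \<Gamma> \<Delta> rule: cf.induct)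
    case (cfL P Q D C)
    then obtain G' where g: "\<Gamma> = Prod P Q # G'" by (cases \<Gamma>) auto
    with cfL have "cf ((P#Q#G')@\<Theta>@\<Delta>) C" using cfL.IH[of "P#Q#G'" \<Delta>] by simp
    then show ?case using g by (simp add: cf.cfL)
  next
    case (cfR G1 B1 G2 B2)
    from cfR.prems(1) have "(\<exists>us. G1 = \<Gamma>@us \<and> us@G2 = [Atom x]@\<Delta>) \<or> (\<exists>us. G1@us = \<Gamma> \<and> G2 = us@[Atom x]@\<Delta>)"
      by (simp add: append_eq_append_conv2 ex_disj_distrib)
    then show ?case
    proof
      assume "\<exists>us. G1 = \<Gamma>@us \<and> us@G2 = [Atom x]@\<Delta>"
      then obtain us where u: "G1 = \<Gamma>@us" "us@G2 = [Atom x]@\<Delta>" by blast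
      show ?case
      proof (cases us)
        case Nil
        with u have "G1 = \<Gamma>" "G2 = []@[Atom x]@\<Delta>" by auto
        then have "cf ([]@\<Theta>@\<Delta>) B2" using cfR.IH(2)[of "[]" \<Delta>] cfR.prems(2) by simp
        from cf.cfR[OF cfR.hyps(1) this] have "cf (G1@(\<Theta>@\<Delta>)) (Prod B1 B2)" by simp
        then show ?thesis using \<open>G1 = \<Gamma>\<close> by simp
      next
        case (Cons a us')
        with u have "G1 = \<Gamma>@[Atom x]@us'" "\<Delta> = us'@G2" by auto
        then have "cf (\<Gamma>@\<Theta>@us') B1" using cfR.IH(1)[of \<Gamma> us'] cfR.prems(2) by simp
        from cf.cfR[OF this cfR.hyps(2)] have "cf ((\<Gamma>@\<Theta>@us')@G2) (Prod B1 B2)" by simp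
        then show ?thesis using \<open>\<Delta> = us'@G2\<close> by simp
      qed
    next
      assume "\<exists>us. G1@us = \<Gamma> \<and> G2 = us@[Atom x]@\<Delta>"
      then obtain us where u: "G1@us = \<Gamma>" "G2 = us@[Atom x]@\<Delta>" by blast
      then have "cf (us@\<Theta>@\<Delta>) B2" using cfR.IH(2)[of us \<Delta>] cfR.prems(2) u by simp
      from cf.cfR[OF cfR.hyps(1) this] have "cf (G1@(us@\<Theta>@\<Delta>)) (Prod B1 B2)" by simp
      then show ?thesis using u(1)[symmetric] by simp
    qed
  next
    case (cfAt p)
    then show ?case by (cases \<Gamma>) auto
  qed
  then show ?case by blast
next
  case (Prod X Y)
  have "cf G B \<Longrightarrow> G = \<Gamma>@[Prod X Y]@\<Delta> \<Longrightarrow> cf \<Theta> (Prod X Y) \<Longrightarrow> cf (\<Gamma>@\<Theta>@\<Delta>) B" for G B \<Gamma> \<Delta> \<Theta>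
  proof (induction arbitrary: \<Gamma> \<Delta> rule: cf.induct)
    case (cfL P Q D C)
    show ?case
    proof (cases \<Gamma>)
      case Nil
      with cfL have "P = X" "Q = Y" "D = \<Delta>" by auto
      have "cf (X#Y#\<Delta>) C" using cfL.hyps(1) \<open>P = X\<close> \<open>Q = Y\<close> \<open>D = \<Delta>\<close> by simp
      from principal[OF Prod.IH cfL.prems(2) refl this] show ?thesis using Nil by simp
    next
      case (Cons g G')
      with cfL have g: "\<Gamma> = Prod P Q # G'" by auto
      with cfL have "cf ((P#Q#G')@\<Theta>@\<Delta>) C" using cfL.IH[of "P#Q#G'" \<Delta>] by simp
      then show ?thesis using g by (simp add: cf.cfL)
    qed
  next
    case (cfR G1 B1 G2 B2)
    from cfR.prems(1) have "(\<exists>us. G1 = \<Gamma>@us \<and> us@G2 = [Prod X Y]@\<Delta>) \<or> (\<exists>us. G1@us = \<Gamma> \<and> G2 = us@[Prod X Y]@\<Delta>)"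
      by (simp add: append_eq_append_conv2 ex_disj_distrib)
    then show ?case
    proof
      assume "\<exists>us. G1 = \<Gamma>@us \<and> us@G2 = [Prod X Y]@\<Delta>"
      then obtain us where u: "G1 = \<Gamma>@us" "us@G2 = [Prod X Y]@\<Delta>" by blast
      show ?case
      proof (cases us)
        case Nil
        with u have "G1 = \<Gamma>" "G2 = []@[Prod X Y]@\<Delta>" by auto
        then have "cf ([]@\<Theta>@\<Delta>) B2" using cfR.IH(2)[of "[]" \<Delta>] cfR.prems(2) by simp
        from cf.cfR[OF cfR.hyps(1) this] have "cf (G1@(\<Theta>@\<Delta>)) (Prod B1 B2)" by simp
        then show ?thesis using \<open>G1 = \<Gamma>\<close> by simp
      next
        case (Cons a us')
        with u have "G1 = \<Gamma>@[Prod X Y]@us'" "\<Delta> = us'@G2" by auto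
        then have "cf (\<Gamma>@\<Theta>@us') B1" using cfR.IH(1)[of \<Gamma> us'] cfR.prems(2) by simp
        from cf.cfR[OF this cfR.hyps(2)] have "cf ((\<Gamma>@\<Theta>@us')@G2) (Prod B1 B2)" by simp
        then show ?thesis using \<open>\<Delta> = us'@G2\<close> by simp
      qed
    next
      assume "\<exists>us. G1@us = \<Gamma> \<and> G2 = us@[Prod X Y]@\<Delta>"
      then obtain us where u: "G1@us = \<Gamma>" "G2 = us@[Prod X Y]@\<Delta>" by blast
      then have "cf (us@\<Theta>@\<Delta>) B2" using cfR.IH(2)[of us \<Delta>] cfR.prems(2) u by simp
      from cf.cfR[OF cfR.hyps(1) this] have "cf (G1@(us@\<Theta>@\<Delta>)) (Prod B1 B2)" by simp
      then show ?thesis using u(1)[symmetric] by simp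
    qed
  next
    case (cfAt p)
    then show ?case by (cases \<Gamma>) auto
  qed
  then show ?case by blast
qed

lemma der_cf: "derivable G C \<Longrightarrow> cf G C"
proof (induction rule: derivable.induct)
  case (prodL A B \<Delta> C) then show ?case by (auto intro: cf.cfL)
next
  case (prodR \<Gamma> A \<Delta> B) then show ?case by (auto intro: cf.cfR)
next
  case (ident A) then show ?case by (rule cf_id)
next
  case (cut \<Theta> A \<Gamma> \<Delta> B) then show ?case using cut_adm[rule_format, OF cut.IH(1) cut.IH(2)] by simp
qed

lemma psi_hd: "\<exists>p rest. psi A = Atom p # rest"
  by (induction A) auto

lemma psi_der: "derivable (psi A) A"
proof (induction A)
  case (Atom x) then show ?case by (simp add: ident)
next
  case (Prod A1 A2)
  then show ?case by (simp add: prodR ident)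
qed

lemma main_le: "irreducible \<Theta> \<Longrightarrow> cf \<Theta> A \<Longrightarrow> subst_le \<Theta> (psi A)"
proof (induction A arbitrary: \<Theta>)
  case (Atom x)
  then show ?case by (simp add: seq cf_der)
next
  case (Prod A1 A2)
  from Prod.prems(2) show ?case
  proof (cases rule: cf.cases)
    case (cfL A B \<Delta>)
    then show ?thesis using Prod.prems(1) by (simp add: irreducible_def)
  next
    case (cfR G1 G2)
    have "G1 \<noteq> []" using cf_ne[OF cfR(2)] .
    then have "irreducible G1" using Prod.prems(1) cfR(1)
      by (cases G1) (auto simp: irreducible_def)
    then have "subst_le G1 (psi A1)" using Prod.IH(1)[OF _ cfR(2)] by simp
    moreover have "subst_le G2 [A2]" using seq[OF cf_der[OF cfR(3)]] by simp
    ultimately have "subst_le (G1 @ G2) (psi A1 @ [A2])" by (rule concat)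
    then show ?thesis using cfR(1) by simp
  qed
qed

theorem proposition2p5:
  fixes A :: "'a fm"
  shows "irreducible (psi A) \<and> derivable (psi A) A \<and>
         (\<forall>\<Theta>. irreducible \<Theta> \<and> derivable \<Theta> A \<longrightarrow> subst_le \<Theta> (psi A))"
proof -
  have "irreducible (psi A)" using psi_hd[of A] by (auto simp: irreducible_def)
  moreover have "derivable (psi A) A" by (rule psi_der)
  moreover have "\<forall>\<Theta>. irreducible \<Theta> \<and> derivable \<Theta> A \<longrightarrow> subst_le \<Theta> (psi A)"
    using main_le der_cf by metis
  ultimately show ?thesis by blast
qed

end
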